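(* Let $n\geq 2$ and let $(A,\cdot,[\cdot,\ldots,\cdot])$ be a transposed Poisson $n$-Lie algebra with $[A,\ldots,A]=A$. Then every ideal $I\neq A$ of the $n$-Lie algebra $(A,[\cdot,\ldots,\cdot])$ is a quasi-ideal, i.e. satisfies $[I,A,\ldots,A]\subseteq I$ and $[A\cdot I,A,\ldots,A]\subseteq I$.
   Context: An $n$-Lie algebra is a vector space $L$ with an $n$-linear skew-symmetric bracket satisfying $[[x_1,\ldots,x_n],y_2,\ldots,y_n]=\sum_{i=1}^n[x_1,\ldots,x_{i-1},[x_i,y_2,\ldots,y_n],x_{i+1},\ldots,x_n]$. A transposed Poisson $n$-Lie algebra (over $\mathbb{C}$) is a triple $(A,\cdot,[\cdot,\ldots,\cdot])$ where $(A,\cdot)$ is commutative associative, $(A,[\cdot,\ldots,\cdot])$ is an $n$-Lie algebra, and $n\,h\,[a_1,\ldots,a_n]=\sum_{i=1}^n[a_1,\ldots,h a_i,\ldots,a_n]$ for all $h,a_i\in A$. An ideal of the $n$-Lie algebra is a subspace $I$ with $[I,A,\ldots,A]\subseteq I$. A quasi-ideal of the transposed Poisson $n$-Lie algebra is a proper subspace $I\subsetneq A$ with $[I,A,\ldots,A]\subseteq I$ and $[A\cdot I,A,\ldots,A]\subseteq I$, where $A\cdot I$ is the span of products $au$, $a\in A,u\in I$, and $[A,\ldots,A]$ is the span of all brackets. *)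

theory Defs
  imports "HOL-Analysis.Analysis"
begin

definition bilinear_op :: "(complex \<Rightarrow> 'a::ab_group_add \<Rightarrow> 'a) \<Rightarrow> ('a \<Rightarrow> 'a \<Rightarrow> 'a) \<Rightarrow> bool" where
  "bilinear_op sc m \<longleftrightarrow>
     (\<forall>x y z. m (x + y) z = m x z + m y z) \<and>
     (\<forall>x y z. m x (y + z) = m x y + m x z) \<and>
     (\<forall>c x y. m (sc c x) y = sc c (m x y)) \<and>
     (\<forall>c x y. m x (sc c y) = sc c (m x y))"

definition comm_assoc_algebra :: "(complex \<Rightarrow> 'a::ab_group_add \<Rightarrow> 'a) \<Rightarrow> ('a \<Rightarrow> 'a \<Rightarrow> 'a) \<Rightarrow> bool" where
  "comm_assoc_algebra sc m \<longleftrightarrow>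
     vector_space sc \<and> bilinear_op sc m \<and>
     (\<forall>x y. m x y = m y x) \<and> (\<forall>x y z. m (m x y) z = m x (m y z))"

text \<open>n-ary brackets are functions on lists; only lists of length n are meaningful.\<close>
definition multilinear :: "(complex \<Rightarrow> 'a::ab_group_add \<Rightarrow> 'a) \<Rightarrow> nat \<Rightarrow> ('a list \<Rightarrow> 'a) \<Rightarrow> bool" where
  "multilinear sc n br \<longleftrightarrow>
     (\<forall>xs i x y. length xs = n \<longrightarrow> i < n \<longrightarrow>
        br (xs[i := x + y]) = br (xs[i := x]) + br (xs[i := y])) \<and>
     (\<forall>xs i c x. length xs = n \<longrightarrow> i < n \<longrightarrow>
        br (xs[i := sc c x]) = sc c (br (xs[i := x])))"

definition skew_symmetric :: "nat \<Rightarrow> ('a::ab_group_add list \<Rightarrow> 'a) \<Rightarrow> bool" where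
  "skew_symmetric n br \<longleftrightarrow>
     (\<forall>xs i j. length xs = n \<longrightarrow> i < n \<longrightarrow> j < n \<longrightarrow> i \<noteq> j \<longrightarrow>
        br (xs[i := xs ! j, j := xs ! i]) = - br xs)"

text \<open>Filippov identity:
 [[x_1..x_n],y_2..y_n] = sum_i [x_1..,[x_i,y_2..y_n],..x_n]; ys = [y_2,...,y_n].\<close>
definition filippov_identity :: "nat \<Rightarrow> ('a::ab_group_add list \<Rightarrow> 'a) \<Rightarrow> bool" where
  "filippov_identity n br \<longleftrightarrow>
     (\<forall>xs ys. length xs = n \<longrightarrow> length ys = n - 1 \<longrightarrow>
        br (br xs # ys) = (\<Sum>i<n. br (xs[i := br ((xs ! i) # ys)])))"

definition n_lie_algebra :: "(complex \<Rightarrow> 'a::ab_group_add \<Rightarrow> 'a) \<Rightarrow> nat \<Rightarrow> ('a list \<Rightarrow> 'a) \<Rightarrow> bool" where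
  "n_lie_algebra sc n br \<longleftrightarrow>
     vector_space sc \<and> multilinear sc n br \<and> skew_symmetric n br \<and> filippov_identity n br"

definition transposed_poisson_n_lie :: "(complex \<Rightarrow> 'a::ab_group_add \<Rightarrow> 'a) \<Rightarrow> nat \<Rightarrow>
    ('a \<Rightarrow> 'a \<Rightarrow> 'a) \<Rightarrow> ('a list \<Rightarrow> 'a) \<Rightarrow> bool" where
  "transposed_poisson_n_lie sc n m br \<longleftrightarrow>
     comm_assoc_algebra sc m \<and> n_lie_algebra sc n br \<and>
     (\<forall>h as. length as = n \<longrightarrow>
        sc (of_nat n) (m h (br as)) = (\<Sum>i<n. br (as[i := m h (as ! i)])))"

definition bracket_span :: "(complex \<Rightarrow> 'a::ab_group_add \<Rightarrow> 'a) \<Rightarrow> ('a list \<Rightarrow> 'a) \<Rightarrow> 'a set list \<Rightarrow> 'a set" where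
  "bracket_span sc br Xs =
     module.span sc {br xs | xs. length xs = length Xs \<and> (\<forall>i < length Xs. xs ! i \<in> Xs ! i)}"

definition prod_span :: "(complex \<Rightarrow> 'a::ab_group_add \<Rightarrow> 'a) \<Rightarrow> ('a \<Rightarrow> 'a \<Rightarrow> 'a) \<Rightarrow> 'a set \<Rightarrow> 'a set" where
  "prod_span sc m I = module.span sc {m a u | a u. u \<in> I}"

definition n_lie_ideal :: "(complex \<Rightarrow> 'a::ab_group_add \<Rightarrow> 'a) \<Rightarrow> nat \<Rightarrow> ('a list \<Rightarrow> 'a) \<Rightarrow> 'a set \<Rightarrow> bool" where
  "n_lie_ideal sc n br I \<longleftrightarrow>
     module.subspace sc I \<and> bracket_span sc br (I # replicate (n - 1) UNIV) \<subseteq> I"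

definition quasi_ideal :: "(complex \<Rightarrow> 'a::ab_group_add \<Rightarrow> 'a) \<Rightarrow> nat \<Rightarrow> ('a \<Rightarrow> 'a \<Rightarrow> 'a) \<Rightarrow>
    ('a list \<Rightarrow> 'a) \<Rightarrow> 'a set \<Rightarrow> bool" where
  "quasi_ideal sc n m br I \<longleftrightarrow>
     module.subspace sc I \<and> I \<noteq> UNIV \<and>
     bracket_span sc br (I # replicate (n - 1) UNIV) \<subseteq> I \<and>
     bracket_span sc br (prod_span sc m I # replicate (n - 1) UNIV) \<subseteq> I"

end

theory Submission
  imports Defs
begin

locale TPI =
  fixes sc :: "complex \<Rightarrow> 'a::ab_group_add \<Rightarrow> 'a"
    and m :: "'a \<Rightarrow> 'a \<Rightarrow> 'a"
    and br :: "'a list \<Rightarrow> 'a"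
    and n :: nat
    and I :: "'a set"
  assumes n2: "n \<ge> 2"
    and tp: "transposed_poisson_n_lie sc n m br"
    and idl: "n_lie_ideal sc n br I"
begin

lemma vs: "vector_space sc"
  using tp unfolding transposed_poisson_n_lie_def comm_assoc_algebra_def by blast

interpretation V: vector_space sc by (rule vs)

lemma ml: "multilinear sc n br"
  using tp unfolding transposed_poisson_n_lie_def n_lie_algebra_def by blast

lemma slot_add: "length xs = n \<Longrightarrow> i < n \<Longrightarrow>
   br (xs[i := x + y]) = br (xs[i := x]) + br (xs[i := y])"
  using ml unfolding multilinear_def by blast

lemma slot_scale: "length xs = n \<Longrightarrow> i < n \<Longrightarrow>
   br (xs[i := sc c x]) = sc c (br (xs[i := x]))"
  using ml unfolding multilinear_def by blast

lemma skew: "length xs = n \<Longrightarrow> i < n \<Longrightarrow> j < n \<Longrightarrow> i \<noteq> j \<Longrightarrow>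
        br (xs[i := xs ! j, j := xs ! i]) = - br xs"
  using tp unfolding transposed_poisson_n_lie_def n_lie_algebra_def skew_symmetric_def by blast

lemma fil: "length xs = n \<Longrightarrow> length ys = n - 1 \<Longrightarrow>
        br (br xs # ys) = (\<Sum>i<n. br (xs[i := br ((xs ! i) # ys)]))"
  using tp unfolding transposed_poisson_n_lie_def n_lie_algebra_def filippov_identity_def by blast

lemma compat: "length as = n \<Longrightarrow>
        sc (of_nat n) (m h (br as)) = (\<Sum>i<n. br (as[i := m h (as ! i)]))"
  using tp unfolding transposed_poisson_n_lie_def by blast

lemma bil: "bilinear_op sc m"
  using tp unfolding transposed_poisson_n_lie_def comm_assoc_algebra_def by blast

lemma madd: "Modules.additive (m h)"
  using bil unfolding bilinear_op_def Modules.additive_def by blast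

lemma mscale: "m h (sc c x) = sc c (m h x)"
  using bil unfolding bilinear_op_def by blast

lemma sub: "V.subspace I"
  using idl unfolding n_lie_ideal_def by blast

lemma inI0: assumes "length xs = n" "xs ! 0 \<in> I" shows "br xs \<in> I"
proof -
  have "br xs \<in> bracket_span sc br (I # replicate (n - 1) UNIV)"
    unfolding bracket_span_def
  proof (rule V.span_base, safe intro!: exI[of _ xs])
    show "length xs = length (I # replicate (n - 1) UNIV)" using assms n2 by simp
    fix i assume "i < length (I # replicate (n - 1) UNIV)"
    then show "xs ! i \<in> (I # replicate (n - 1) UNIV) ! i"
      using assms by (cases i) auto
  qed
  then show ?thesis using idl unfolding n_lie_ideal_def by blast
qed

lemma inI: assumes "length xs = n" "i < n" "xs ! i \<in> I" shows "br xs \<in> I"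
proof (cases "i = 0")
  case True then show ?thesis using assms inI0 by simp
next
  case False
  let ?ys = "xs[0 := xs ! i, i := xs ! 0]"
  have "?ys ! 0 = xs ! i" using False assms by simp
  then have "br ?ys \<in> I" using assms inI0 by simp
  moreover have "br ?ys = - br xs" using skew[of xs 0 i] assms False by simp
  ultimately have "- (- br xs) \<in> I" using V.subspace_neg[OF sub] by metis
  then show ?thesis by simp
qed

lemma inI_upd: "length xs = n \<Longrightarrow> k < n \<Longrightarrow> xs ! k \<in> I \<Longrightarrow> j \<noteq> k \<Longrightarrow> br (xs[j := v]) \<in> I"
  by (rule inI[of _ k]) simp_all

lemma slot_cong: assumes "length xs = n" "i < n" "a - b \<in> I"
  shows "br (xs[i := a]) - br (xs[i := b]) \<in> I"
proof -
  have "br (xs[i := a]) = br (xs[i := b + (a - b)])" by simp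
  also have "\<dots> = br (xs[i := b]) + br (xs[i := a - b])" using slot_add assms by blast
  finally have "br (xs[i := a]) - br (xs[i := b]) = br (xs[i := a - b])" by simp
  moreover have "br (xs[i := a - b]) \<in> I" using inI[of "xs[i := a - b]" i] assms by simp
  ultimately show ?thesis by simp
qed

lemma sum_rest: assumes "i < n" "\<And>j. j < n \<Longrightarrow> j \<noteq> i \<Longrightarrow> f j \<in> I"
  shows "(\<Sum>j<n. f j) - f i \<in> I"
proof -
  have "(\<Sum>j<n. f j) = f i + (\<Sum>j\<in>{..<n} - {i}. f j)"
    using assms(1) by (simp add: sum.remove)
  moreover have "(\<Sum>j\<in>{..<n} - {i}. f j) \<in> I"
    using assms(2) by (intro V.subspace_sum[OF sub]) auto
  ultimately show ?thesis by simp
qed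

lemma slot_span: assumes "length xs = n" "i < n" "z \<in> V.span S"
  "\<And>s. s \<in> S \<Longrightarrow> br (xs[i := s]) \<in> I"
  shows "br (xs[i := z]) \<in> I"
  using assms(3)
proof (induct rule: V.span_induct)
  case base
  show ?case unfolding V.subspace_def
  proof (intro conjI ballI allI; simp)
    have "br (xs[i := 0]) = 0" using slot_scale[OF assms(1,2), of 0 0] by simp
    then show "br (xs[i := 0]) \<in> I" using V.subspace_0[OF sub] by simp
  next
    fix x y assume "br (xs[i := x]) \<in> I" "br (xs[i := y]) \<in> I"
    then show "br (xs[i := x + y]) \<in> I"
      using slot_add assms V.subspace_add[OF sub] by simp
  next
    fix c x assume "br (xs[i := x]) \<in> I"
    then show "br (xs[i := sc c x]) \<in> I"
      using slot_scale assms V.subspace_scale[OF sub] by simp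
  qed
next
  case (step x) then show ?case using assms(4) by simp
qed

lemma key: assumes u: "u \<in> I" and ys: "length ys = n" and A: "length A' = n - 2"
  shows "br (m h u # br ys # A') \<in> I"
proof -
  interpret D: additive "m h" by (rule madd)
  define c where "c = (of_nat n :: complex)"
  define X where "X = br (m h u # br ys # A')"
  define P where "P = br (u # br ys # A')"
  define w where "w = (\<lambda>i. br (ys!i # u # A'))"
  define Q where "Q = (\<lambda>i. br (ys[i := w i]))"
  define R where "R = (\<lambda>i. br (ys[i := m h (w i)]))"
  define T where "T = (\<lambda>i. br (ys[i := br (ys!i # m h u # A')]))"
  have n1: "1 < n" using n2 by simp
  have len: "length (u # br ys # A') = n" using A n2 by simp
  have a: "sc c (m h P) - X \<in> I"
  proof -
    have "sc c (m h P) = (\<Sum>i<n. br ((u # br ys # A')[i := m h ((u # br ys # A') ! i)]))"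
      using compat[OF len] unfolding P_def c_def by simp
    moreover have "(\<Sum>i<n. br ((u # br ys # A')[i := m h ((u # br ys # A') ! i)]))
       - br ((u # br ys # A')[0 := m h ((u # br ys # A') ! 0)]) \<in> I"
    proof (rule sum_rest)
      show "0 < n" using n2 by simp
      fix j assume "j < n" "j \<noteq> 0"
      then show "br ((u # br ys # A')[j := m h ((u # br ys # A') ! j)]) \<in> I"
        using inI_upd[OF len, of 0] n2 u by simp
    qed
    ultimately show ?thesis unfolding X_def by simp
  qed
  have lenw: "length (ys ! i # u # A') = n" for i using A n2 by simp
  have wI: "w i \<in> I" for i unfolding w_def using inI[OF lenw, of 1] n1 u by simp
  have b: "P = - (\<Sum>i<n. Q i)"
  proof -
    have "br ((u # br ys # A')[0 := (u # br ys # A') ! 1, 1 := (u # br ys # A') ! 0]) = - P"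
      unfolding P_def using skew[OF len, of 0 1] n1 by simp
    then have "br (br ys # u # A') = - P" by simp
    moreover have "br (br ys # u # A') = (\<Sum>i<n. Q i)"
      unfolding Q_def w_def using fil[OF ys, of "u # A'"] A n2 by simp
    ultimately show ?thesis by (metis minus_minus)
  qed
  have c: "sc c (m h (Q i)) - R i \<in> I" if i: "i < n" for i
  proof -
    have lw: "length (ys[i := w i]) = n" using ys by simp
    have "sc c (m h (Q i)) = (\<Sum>j<n. br ((ys[i := w i])[j := m h (ys[i := w i] ! j)]))"
      using compat[OF lw] unfolding Q_def c_def by simp
    moreover have "(\<Sum>j<n. br ((ys[i := w i])[j := m h (ys[i := w i] ! j)]))
      - br ((ys[i := w i])[i := m h (ys[i := w i] ! i)]) \<in> I"
    proof (rule sum_rest[OF i])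
      fix j assume "j < n" "j \<noteq> i"
      then show "br ((ys[i := w i])[j := m h (ys[i := w i] ! j)]) \<in> I"
        using inI_upd[OF lw i] i ys wI by simp
    qed
    ultimately show ?thesis unfolding R_def using i ys by simp
  qed
  have d: "sc c (R i) - T i \<in> I" if i: "i < n" for i
  proof -
    have "sc c (R i) = br (ys[i := sc c (m h (w i))])"
      unfolding R_def using slot_scale[OF ys i] by simp
    moreover have "sc c (m h (w i)) - br (ys!i # m h u # A') \<in> I"
    proof -
      have "sc c (m h (w i)) = (\<Sum>j<n. br ((ys ! i # u # A')[j := m h ((ys ! i # u # A') ! j)]))"
        using compat[OF lenw] unfolding w_def c_def by simp
      moreover have "(\<Sum>j<n. br ((ys ! i # u # A')[j := m h ((ys ! i # u # A') ! j)]))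
         - br ((ys ! i # u # A')[1 := m h ((ys ! i # u # A') ! 1)]) \<in> I"
      proof (rule sum_rest[OF n1])
        fix j assume "j < n" "j \<noteq> 1"
        then show "br ((ys ! i # u # A')[j := m h ((ys ! i # u # A') ! j)]) \<in> I"
          using inI_upd[OF lenw n1] u by simp
      qed
      ultimately show ?thesis by simp
    qed
    ultimately show ?thesis unfolding T_def using slot_cong[OF ys i] by simp
  qed
  have e: "(\<Sum>i<n. T i) = - X"
  proof -
    have len2: "length (m h u # br ys # A') = n" using A n2 by simp
    have "br ((m h u # br ys # A')[0 := (m h u # br ys # A') ! 1, 1 := (m h u # br ys # A') ! 0]) = - X"
      unfolding X_def using skew[OF len2, of 0 1] n1 by simp
    then have "br (br ys # m h u # A') = - X" by simp
    moreover have "br (br ys # m h u # A') = (\<Sum>i<n. T i)"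
      unfolding T_def using fil[OF ys, of "m h u # A'"] A n2 by simp
    ultimately show ?thesis by simp
  qed
  have f0: "sc c (sc c (m h P)) = - (\<Sum>i<n. sc c (sc c (m h (Q i))))"
    unfolding b by (simp add: D.minus D.sum V.scale_sum_right)
  have f1: "(\<Sum>i<n. sc c (sc c (m h (Q i))) - T i) \<in> I"
  proof (rule V.subspace_sum[OF sub])
    fix i assume "i \<in> {..<n}"
    then have i: "i < n" by simp
    have "sc c (sc c (m h (Q i))) - T i = sc c (sc c (m h (Q i)) - R i) + (sc c (R i) - T i)"
      by (simp add: V.scale_right_diff_distrib)
    then show "sc c (sc c (m h (Q i))) - T i \<in> I"
      using c[OF i] d[OF i] V.subspace_scale[OF sub] V.subspace_add[OF sub] by metis
  qed
  have g1: "sc c (sc c (m h P)) - X \<in> I"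
  proof -
    have "sc c (sc c (m h P)) - X = - (\<Sum>i<n. sc c (sc c (m h (Q i))) - T i)"
      using f0 e by (simp add: sum_subtractf)
    then show ?thesis using f1 V.subspace_neg[OF sub] by metis
  qed
  have g2: "sc c (sc c (m h P)) - sc c X \<in> I"
    using V.subspace_scale[OF sub a, of c] by (simp add: V.scale_right_diff_distrib)
  have "sc (c - 1) X = (sc c (sc c (m h P)) - X) - (sc c (sc c (m h P)) - sc c X)"
    by (simp add: V.scale_left_diff_distrib)
  then have h: "sc (c - 1) X \<in> I" using g1 g2 V.subspace_diff[OF sub] by metis
  have "c - 1 \<noteq> 0" unfolding c_def using n2 by simp
  then have "X = sc (1 / (c - 1)) (sc (c - 1) X)" by simp
  then have "X \<in> I" using h V.subspace_scale[OF sub] by metis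
  then show ?thesis unfolding X_def .
qed

lemma prodI: assumes perf: "bracket_span sc br (replicate n UNIV) = UNIV" and u: "u \<in> I"
  and zs: "length zs = n - 1" shows "br (m a u # zs) \<in> I"
proof -
  have n1: "1 < n" using n2 by simp
  obtain z A' where zs_eq: "zs = z # A'" using zs n2 by (cases zs) auto
  have lA: "length A' = n - 2" using zs zs_eq by simp
  have len: "length (m a u # z # A') = n" using lA n2 by simp
  have "z \<in> V.span {br xs | xs. length xs = length (replicate n (UNIV::'a set)) \<and>
     (\<forall>i<length (replicate n (UNIV::'a set)). xs ! i \<in> replicate n (UNIV::'a set) ! i)}"
    using perf unfolding bracket_span_def by blast
  then have "z \<in> V.span {br xs | xs. length xs = n}" by simp
  then have "br ((m a u # z # A')[1 := z]) \<in> I"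
    by (rule slot_span[OF len n1]) (auto simp: key[OF u _ lA])
  then show ?thesis by (simp add: zs_eq)
qed

lemma quasi: assumes perf: "bracket_span sc br (replicate n UNIV) = UNIV" and ne: "I \<noteq> UNIV"
  shows "quasi_ideal sc n m br I"
  unfolding quasi_ideal_def
proof (intro conjI sub ne)
  show "bracket_span sc br (I # replicate (n - 1) UNIV) \<subseteq> I"
    using idl unfolding n_lie_ideal_def by blast
  show "bracket_span sc br (prod_span sc m I # replicate (n - 1) UNIV) \<subseteq> I"
    unfolding bracket_span_def
  proof (rule V.span_minimal[OF _ sub], safe)
    fix xs :: "'a list"
    assume l: "length xs = length (prod_span sc m I # replicate (n - 1) UNIV)"
      and h: "\<forall>i<length (prod_span sc m I # replicate (n - 1) UNIV).
         xs ! i \<in> (prod_span sc m I # replicate (n - 1) UNIV) ! i"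
    have ln: "length xs = n" using l n2 by simp
    have x0: "xs ! 0 \<in> V.span {m a u | a u. u \<in> I}"
      using h unfolding prod_span_def by auto
    obtain x zs where xs_eq: "xs = x # zs" using ln n2 by (cases xs) auto
    have lz: "length zs = n - 1" using ln xs_eq by simp
    have "br (xs[0 := xs ! 0]) \<in> I"
    proof (rule slot_span[OF ln _ x0])
      show "0 < n" using n2 by simp
      fix s assume "s \<in> {m a u | a u. u \<in> I}"
      then obtain a u where "s = m a u" "u \<in> I" by blast
      then show "br (xs[0 := s]) \<in> I" using prodI[OF perf _ lz] xs_eq by simp
    qed
    then show "br xs \<in> I" by simp
  qed
qed

end

theorem mainTheorem5:
  fixes sc :: "complex \<Rightarrow> 'a::ab_group_add \<Rightarrow> 'a"
    and m :: "'a \<Rightarrow> 'a \<Rightarrow> 'a"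
    and br :: "'a list \<Rightarrow> 'a"
    and n :: nat
    and I :: "'a set"
  assumes "n \<ge> 2"
    and "transposed_poisson_n_lie sc n m br"
    and "bracket_span sc br (replicate n UNIV) = UNIV"
    and "n_lie_ideal sc n br I"
    and "I \<noteq> UNIV"
  shows "quasi_ideal sc n m br I"
proof -
  interpret TPI sc m br n I using assms(1,2,4) by unfold_locales
  show ?thesis using quasi assms(3,5) by blast
qed

end
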